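(* There exist a finite action set $\mathcal{A}$, a deterministic environment, a policy $\pi$ and a nonempty target set $\mathcal{N}^g$ with $\pi(n)>0$ for every $n\in\mathcal{N}^g$, such that the generic tree search which at every iteration $k$ selects $n_k\in\arg\max_{n\in\mathcal{F}_k}\pi(n)$ (ties broken arbitrarily) never selects any node of $\mathcal{N}^g$.
   Context: Setting: a finite action set $\mathcal{A}$, a set of states $\mathcal{S}$ with initial state $s_0$, a deterministic transition function $T:\mathcal{S}\times\mathcal{A}\to\mathcal{S}$, and a set of goal states $\mathcal{G}\subseteq\mathcal{S}$. Nodes are finite sequences of actions; the root $n_0$ is the empty sequence; $T(n)$ denotes the state reached from $s_0$ by applying the actions of $n$ in order; the children of $n$ are the sequences $na$, $a\in\mathcal{A}$. The target set is $\mathcal{N}^g=\{n : T(n)\in\mathcal{G}\}$. A policy is a function $\pi$ from nodes to $[0,1]$ with $\pi(n_0)=1$ and $\pi(n)=\sum_{a\in\mathcal{A}}\pi(na)$ for every node $n$. Generic tree search: $\mathcal{V}_1=\emptyset$, $\mathcal{F}_1=\{n_0\}$; at iteration $k\ge 1$ a node $n_k\in\mathcal{F}_k$ is selected; if $n_k\in\mathcal{N}^g$ the search stops with success; otherwise $\mathcal{V}_{k+1}=\mathcal{V}_k\cup\{n_k\}$ and $\mathcal{F}_{k+1}=\bigl(\bigcup_{n\in\mathcal{V}_{k+1}}\{na:a\in\mathcal{A}\}\bigr)\setminus\mathcal{V}_{k+1}$. *)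

theory Defs
  imports Complex_Main
begin

text \<open>Nodes are finite action sequences (lists); the root is the empty list.\<close>

definition reach :: "('s \<Rightarrow> 'a \<Rightarrow> 's) \<Rightarrow> 's \<Rightarrow> 'a list \<Rightarrow> 's" where
  "reach T s0 n = fold (\<lambda>a s. T s a) n s0"

definition target_set :: "'a set \<Rightarrow> ('s \<Rightarrow> 'a \<Rightarrow> 's) \<Rightarrow> 's \<Rightarrow> 's set \<Rightarrow> 'a list set" where
  "target_set A T s0 G = {n \<in> lists A. reach T s0 n \<in> G}"

definition is_policy :: "'a set \<Rightarrow> ('a list \<Rightarrow> real) \<Rightarrow> bool" where
  "is_policy A \<pi> \<longleftrightarrow> (\<forall>n \<in> lists A. 0 \<le> \<pi> n \<and> \<pi> n \<le> 1)
     \<and> \<pi> [] = 1 \<and> (\<forall>n \<in> lists A. \<pi> n = (\<Sum>a\<in>A. \<pi> (n @ [a])))"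

definition frontier :: "'a set \<Rightarrow> 'a list set \<Rightarrow> 'a list set" where
  "frontier A V = (if V = {} then {[]} else (\<Union>n\<in>V. {n @ [a] | a. a \<in> A}) - V)"

text \<open>Iterations are indexed from 0;
  the visited set before iteration k is {sel 0, ..., sel (k-1)}. The constraint at
  iteration k applies as long as the search has not stopped, i.e. no earlier selected
  node was a target.\<close>
definition greedy_run ::
  "'a set \<Rightarrow> ('a list \<Rightarrow> real) \<Rightarrow> 'a list set \<Rightarrow> (nat \<Rightarrow> 'a list) \<Rightarrow> bool" where
  "greedy_run A \<pi> Ng sel \<longleftrightarrow>
     (\<forall>k. (\<forall>j<k. sel j \<notin> Ng) \<longrightarrow>
        sel k \<in> frontier A (sel ` {..<k}) \<and>
        (\<forall>m \<in> frontier A (sel ` {..<k}). \<pi> m \<le> \<pi> (sel k)))"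

end

theory Submission
  imports Defs
begin

definition Z :: "nat \<Rightarrow> nat list" where "Z k = replicate k 0"

definition pi0 :: "nat list \<Rightarrow> real" where
  "pi0 n = (1/2)^(length n + 1) + (if set n \<subseteq> {0} then 1/2 else 0)"

lemma pi0_pol: "is_policy {0,1} pi0"
proof -
  have b: "(1/2::real)^(length n + 1) \<le> 1/2" for n :: "nat list"
    by (simp add: power_le_one)
  show ?thesis
    unfolding is_policy_def
  proof (intro conjI ballI)
    fix n :: "nat list"
    show "0 \<le> pi0 n" by (simp add: pi0_def)
    show "pi0 n \<le> 1" using b[of n] by (simp add: pi0_def)
    show "pi0 n = (\<Sum>a\<in>{0,1}. pi0 (n @ [a]))"
      by (simp add: pi0_def)
  next
    show "pi0 [] = 1" by (simp add: pi0_def)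
  qed
qed

lemma reach_Z: "reach max 0 (Z k) = 0"
  unfolding reach_def Z_def by (induct k) auto

lemma Z_app1': "Z j @ [1] \<noteq> Z i"
proof
  assume "Z j @ [1] = Z i"
  then have "(1::nat) \<in> set (Z i)" by (metis in_set_conv_decomp)
  then show False unfolding Z_def by simp
qed

lemma Z_app1: "Z j @ [1] \<notin> range Z"
  using Z_app1' by blast

lemma Z_inj: "Z i = Z j \<longleftrightarrow> i = j"
  unfolding Z_def by auto

lemma Z_Suc: "Z j @ [0] = Z (Suc j)"
  unfolding Z_def by (simp add: replicate_append_same)

lemma frontier_Z:
  "frontier {0,1} (Z ` {..<k}) = insert (Z k) {Z j @ [1] | j. j < k}"
proof (cases k)
  case 0 then show ?thesis by (simp add: frontier_def Z_def)
next
  case (Suc m)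
  have ne: "Z ` {..<k} \<noteq> {}" using Suc by auto
  have "frontier {0,1} (Z ` {..<k}) = (\<Union>j<k. {Z j @ [0], Z j @ [1]}) - Z ` {..<k}"
    using ne unfolding frontier_def by auto
  also have "\<dots> = insert (Z k) {Z j @ [1] | j. j < k}"
  proof (intro set_eqI iffI)
    fix x assume "x \<in> (\<Union>j<k. {Z j @ [0], Z j @ [1]}) - Z ` {..<k}"
    then obtain j where j: "j < k" "x = Z j @ [0] \<or> x = Z j @ [1]" "x \<notin> Z ` {..<k}" by auto
    show "x \<in> insert (Z k) {Z j @ [1] | j. j < k}"
    proof (cases "x = Z j @ [0]")
      case True
      then have "x = Z (Suc j)" by (simp add: Z_Suc)
      with j have "Suc j = k" by (auto simp: Z_inj)
      with \<open>x = Z (Suc j)\<close> show ?thesis by simp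
    next
      case False then show ?thesis using j by auto
    qed
  next
    fix x assume x: "x \<in> insert (Z k) {Z j @ [1] | j. j < k}"
    show "x \<in> (\<Union>j<k. {Z j @ [0], Z j @ [1]}) - Z ` {..<k}"
    proof (cases "x = Z k")
      case True
      then have "x = Z m @ [0]" using Suc by (simp add: Z_Suc)
      then show ?thesis using Suc True by (auto simp: Z_inj)
    next
      case False
      then obtain j where "j < k" "x = Z j @ [1]" using x by auto
      then show ?thesis using Z_app1'[of j] by auto
    qed
  qed
  finally show ?thesis .
qed

lemma pi0_Z: "pi0 (Z k) > 1/2"
proof -
  have "set (Z k) \<subseteq> {0}" unfolding Z_def by auto
  then show ?thesis unfolding pi0_def by simp
qed

lemma pi0_Z1: "pi0 (Z j @ [1]) \<le> 1/2"
proof -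
  have "\<not> set (Z j @ [1]) \<subseteq> {0}" by simp
  moreover have "(1/2::real)^(length (Z j @ [1]) + 1) \<le> 1/2"
  proof -
    have "(1/2::real)^(length (Z j @ [1])) \<le> 1" by (rule power_le_one) auto
    then show ?thesis by simp
  qed
  ultimately show ?thesis unfolding pi0_def by simp
qed

lemma frontier_max: "m \<in> frontier {0,1} (Z ` {..<k}) \<Longrightarrow> pi0 m \<le> pi0 (Z k)"
proof -
  assume "m \<in> frontier {0,1} (Z ` {..<k})"
  then have "m = Z k \<or> (\<exists>j. m = Z j @ [1])" unfolding frontier_Z by blast
  then show ?thesis
  proof
    assume "\<exists>j. m = Z j @ [1]"
    then obtain j where "m = Z j @ [1]" by blast
    then show ?thesis using pi0_Z[of k] pi0_Z1[of j] by simp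
  qed simp
qed

lemma tgt: "target_set {0,1} max (0::nat) {1} = {n \<in> lists {0,1}. reach max 0 n \<in> {1}}"
  by (simp add: target_set_def)

lemma Z_notin: "Z k \<notin> target_set {0,1} max (0::nat) {1}"
  using reach_Z[of k] by (simp add: target_set_def)

lemma greedy_Z: "greedy_run {0,1} pi0 Ng Z"
proof -
  have "Z k \<in> frontier {0,1} (Z ` {..<k})" for k unfolding frontier_Z by simp
  then show ?thesis unfolding greedy_run_def using frontier_max by blast
qed

lemma greedy_all:
  assumes g: "greedy_run {0,1} pi0 (target_set {0,1} max (0::nat) {1}) sel"
  shows "sel k = Z k"
proof (induction k rule: less_induct)
  case (less k)
  have "\<forall>j<k. sel j \<notin> target_set {0,1} max (0::nat) {1}" using less Z_notin by auto
  with g have h: "sel k \<in> frontier {0,1} (sel ` {..<k})"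
     "\<forall>m \<in> frontier {0,1} (sel ` {..<k}). pi0 m \<le> pi0 (sel k)"
    unfolding greedy_run_def by auto
  have e: "sel ` {..<k} = Z ` {..<k}" using less by auto
  have "Z k \<in> frontier {0,1} (Z ` {..<k})" unfolding frontier_Z by simp
  with h e have le: "pi0 (Z k) \<le> pi0 (sel k)" by auto
  from h(1) have "sel k \<in> insert (Z k) {Z j @ [1] | j. j < k}" unfolding e frontier_Z .
  then show ?case
  proof
    assume "sel k \<in> {Z j @ [1] | j. j < k}"
    then obtain j where "sel k = Z j @ [1]" by auto
    then show ?thesis using le pi0_Z[of k] pi0_Z1[of j] by simp
  qed simp
qed

theorem theorem1:
  shows "\<exists>(A :: nat set) (T :: nat \<Rightarrow> nat \<Rightarrow> nat) (s0 :: nat) (G :: nat set)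
            (\<pi> :: nat list \<Rightarrow> real).
     finite A \<and> is_policy A \<pi> \<and>
     target_set A T s0 G \<noteq> {} \<and>
     (\<forall>n \<in> target_set A T s0 G. \<pi> n > 0) \<and>
     (\<exists>sel. greedy_run A \<pi> (target_set A T s0 G) sel) \<and>
     (\<forall>sel. greedy_run A \<pi> (target_set A T s0 G) sel \<longrightarrow>
        (\<forall>k. sel k \<notin> target_set A T s0 G))"
proof -
  have t1: "[1] \<in> target_set {0,1} max (0::nat) {1}" by (simp add: target_set_def reach_def max_def)
  have p: "\<forall>n. pi0 n > 0" by (simp add: pi0_def add_pos_nonneg)
  show ?thesis
    apply (rule exI[of _ "{0,1::nat}"], rule exI[of _ "max::nat\<Rightarrow>nat\<Rightarrow>nat"], rule exI[of _ "0::nat"], rule exI[of _ "{1::nat}"], rule exI[of _ pi0])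
    apply (intro conjI)
    using t1 p pi0_pol greedy_Z greedy_all Z_notin by (auto simp del: insert_iff)
qed

end
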